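(* Let $G$ be strongly connected and $C\subseteq V$. For each of the dynamics BD-B, BD-D, DB-B, DB-D and LD defined below, let $F^{(r)}_C$ denote the fixation probability of $C$ under that dynamics with mutant fitness $r$. Then for every $r>1$, $F^{(1)}_C\le F^{(r)}_C$.
   Context: Let $G=(V,E)$ be a finite directed graph with $N=|V|$ vertices and weight matrix $W=[w_{ij}]$, $w_{ij}>0$ iff $(i,j)\in E$, $\sum_j w_{ij}=1$ for all $i$. A configuration is a set of mutants; the fitness of a vertex is $f_k=r$ if it is a mutant and $f_k=1$ otherwise (evaluated in the current configuration). Starting from configuration $C$ at time $0$, each time step applies one of the following update rules (the rule being fixed throughout): BD-B: choose $i$ with probability $f_i/\sum_k f_k$, then $j$ with probability $w_{ij}$; $j$ takes the type of $i$. BD-D: choose $i$ uniformly ($1/N$), then $j$ with probability $w_{ij}f_j^{-1}/\sum_q w_{iq}f_q^{-1}$; $j$ takes the type of $i$. DB-B: choose $j$ uniformly ($1/N$), then $i$ with probability $w_{ij}f_i/\sum_q w_{qj}f_q$; $j$ takes the type of $i$. DB-D: choose $j$ with probability $f_j^{-1}/\sum_k f_k^{-1}$, then $i$ with probability $w_{ij}/\sum_q w_{qj}$; $j$ takes the type of $i$. LD: choose an edge $(i,j)\in E$ with probability $w_{ij}f_i/\sum_{(q,\ell)\in E}w_{q\ell}f_q$; $j$ takes the type of $i$. The fixation probability is the limit as $t\to\infty$ of the probability that all vertices are mutants at time $t$; $r=1$ is neutral drift. *)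

theory Defs
  imports Complex_Main
begin

text \<open>Vertices are the elements of a finite type 'v (so V = UNIV, N = CARD('v)).
  A configuration is the set of mutant vertices.\<close>

datatype rule = BD_B | BD_D | DB_B | DB_D | LD

definition weight_matrix :: "('v::finite \<Rightarrow> 'v \<Rightarrow> real) \<Rightarrow> bool" where
  "weight_matrix W \<longleftrightarrow> (\<forall>i j. 0 \<le> W i j) \<and> (\<forall>i. (\<Sum>j\<in>UNIV. W i j) = 1)"

definition edges :: "('v \<Rightarrow> 'v \<Rightarrow> real) \<Rightarrow> ('v \<times> 'v) set" where
  "edges W = {(i, j). W i j > 0}"

definition strongly_connected :: "('v \<Rightarrow> 'v \<Rightarrow> real) \<Rightarrow> bool" where
  "strongly_connected W \<longleftrightarrow> (\<forall>i j. (i, j) \<in> (edges W)\<^sup>*)"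

definition fit :: "real \<Rightarrow> 'v set \<Rightarrow> 'v \<Rightarrow> real" where
  "fit r C k = (if k \<in> C then r else 1)"

text \<open>Probability that, in configuration C, the (ordered) pair (i,j) is selected,
  i.e. j takes the type of i.\<close>
definition pair_prob :: "rule \<Rightarrow> ('v::finite \<Rightarrow> 'v \<Rightarrow> real) \<Rightarrow> real \<Rightarrow> 'v set \<Rightarrow> 'v \<Rightarrow> 'v \<Rightarrow> real" where
  "pair_prob rl W r C i j = (let f = fit r C; N = real (card (UNIV :: 'v set)) in
     (case rl of
        BD_B \<Rightarrow> f i / (\<Sum>k\<in>UNIV. f k) * W i j
      | BD_D \<Rightarrow> (1 / N) * ((W i j / f j) / (\<Sum>q\<in>UNIV. W i q / f q))
      | DB_B \<Rightarrow> (1 / N) * ((W i j * f i) / (\<Sum>q\<in>UNIV. W q j * f q))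
      | DB_D \<Rightarrow> ((1 / f j) / (\<Sum>k\<in>UNIV. 1 / f k)) * (W i j / (\<Sum>q\<in>UNIV. W q j))
      | LD \<Rightarrow> (W i j * f i) / (\<Sum>(q, l)\<in>edges W. W q l * f q)))"

definition replace :: "'v set \<Rightarrow> 'v \<Rightarrow> 'v \<Rightarrow> 'v set" where
  "replace C i j = (if i \<in> C then insert j C else C - {j})"

definition trans_prob :: "rule \<Rightarrow> ('v::finite \<Rightarrow> 'v \<Rightarrow> real) \<Rightarrow> real \<Rightarrow> 'v set \<Rightarrow> 'v set \<Rightarrow> real" where
  "trans_prob rl W r C D = (\<Sum>(i, j)\<in>UNIV. if replace C i j = D then pair_prob rl W r C i j else 0)"

fun config_dist :: "rule \<Rightarrow> ('v::finite \<Rightarrow> 'v \<Rightarrow> real) \<Rightarrow> real \<Rightarrow> 'v set \<Rightarrow> nat \<Rightarrow> 'v set \<Rightarrow> real" where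
  "config_dist rl W r C 0 D = (if D = C then 1 else 0)"
| "config_dist rl W r C (Suc t) D = (\<Sum>D'\<in>UNIV. config_dist rl W r C t D' * trans_prob rl W r D' D)"

definition fixation_prob :: "rule \<Rightarrow> ('v::finite \<Rightarrow> 'v \<Rightarrow> real) \<Rightarrow> real \<Rightarrow> 'v set \<Rightarrow> real" where
  "fixation_prob rl W r C = lim (\<lambda>t. config_dist rl W r C t UNIV)"

end

theory Submission
  imports Defs "HOL-Analysis.Analysis"
begin

lemma balance_exists:
  fixes p :: "'v::finite \<Rightarrow> 'v \<Rightarrow> real"
  assumes pn: "\<And>i j. p i j \<ge> 0" and ps: "(\<Sum>i\<in>UNIV. \<Sum>j\<in>UNIV. p i j) = 1"
  shows "\<exists>\<pi>. (\<forall>i. \<pi> i \<ge> 0) \<and> (\<Sum>i\<in>UNIV. \<pi> i) = 1 \<and>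
           (\<forall>i. (\<Sum>j\<in>UNIV. p i j * \<pi> j) = \<pi> i * (\<Sum>j\<in>UNIV. p j i))"
proof -
  define S where "S = {x::real^'v. (\<forall>i. 0 \<le> x$i) \<and> (\<Sum>i\<in>UNIV. x$i) = 1}"
  define T where "T = (\<lambda>x::real^'v. \<chi> i. (\<Sum>j\<in>UNIV. p i j * x$j) + x$i * (1 - (\<Sum>j\<in>UNIV. p j i)))"
  have colle: "(\<Sum>j\<in>UNIV. p j i) \<le> 1" for i
  proof -
    have "(\<Sum>j\<in>UNIV. p j i) \<le> (\<Sum>j\<in>UNIV. \<Sum>k\<in>UNIV. p j k)"
      by (intro sum_mono member_le_sum) (auto simp: pn)
    then show ?thesis using ps by simp
  qed
  have cl: "closed S" unfolding S_def
    by (intro closed_Collect_conj closed_Collect_all closed_Collect_le closed_Collect_eq)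
       (auto intro!: continuous_intros)
  have bd: "bounded S" unfolding bounded_iff
  proof (intro exI ballI)
    fix x assume "x \<in> S"
    then have "norm x \<le> (\<Sum>i\<in>UNIV. \<bar>x$i\<bar>)" by (rule_tac norm_le_l1_cart)
    also have "\<dots> = 1" using \<open>x \<in> S\<close> by (simp add: S_def)
    finally show "norm x \<le> 1" .
  qed
  have cv: "convex S" unfolding convex_def S_def
    by (auto simp: sum.distrib sum_distrib_left[symmetric])
  have ne: "S \<noteq> {}"
  proof -
    have "((\<chi> i. if i = undefined then 1 else 0) :: real^'v) \<in> S" by (simp add: S_def)
    then show ?thesis by blast
  qed
  have ct: "continuous_on S T" unfolding T_def by (intro continuous_intros)
  have im: "T \<in> S \<rightarrow> S"
  proof
    fix x assume x: "x \<in> S"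
    have "0 \<le> T x $ i" for i
      using x colle[of i] unfolding T_def S_def
      by (auto intro!: add_nonneg_nonneg sum_nonneg mult_nonneg_nonneg pn)
    moreover have "(\<Sum>i\<in>UNIV. T x $ i) = 1"
    proof -
      have "(\<Sum>i\<in>UNIV. T x $ i) = (\<Sum>i\<in>UNIV. \<Sum>j\<in>UNIV. p i j * x$j) + (\<Sum>i\<in>UNIV. x$i) - (\<Sum>i\<in>UNIV. \<Sum>j\<in>UNIV. p j i * x$i)"
        by (simp add: T_def sum.distrib sum_subtractf algebra_simps sum_distrib_left sum_distrib_right)
      also have "(\<Sum>i\<in>UNIV. \<Sum>j\<in>UNIV. p i j * x$j) = (\<Sum>i\<in>UNIV. \<Sum>j\<in>UNIV. p j i * x$i)"
        by (rule sum.swap)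
      finally show ?thesis using x by (simp add: S_def)
    qed
    ultimately show "T x \<in> S" by (simp add: S_def)
  qed
  obtain x where "x \<in> S" "T x = x"
    using brouwer[OF compact_eq_bounded_closed[THEN iffD2, OF conjI[OF bd cl]] cv ne ct im] by blast
  then have "(\<Sum>j\<in>UNIV. p i j * x$j) = x$i * (\<Sum>j\<in>UNIV. p j i)" for i
    unfolding T_def by (metis (no_types, lifting) vec_lambda_beta add_diff_cancel_left' diff_add_cancel right_diff_distrib mult.right_neutral add.commute)
  then show ?thesis using \<open>x \<in> S\<close> by (intro exI[of _ "\<lambda>i. x$i"]) (auto simp: S_def)
qed



lemma sum_pairs: "(\<Sum>(i, j)\<in>(UNIV::('a::finite\<times>'b::finite) set). g i j) = (\<Sum>i\<in>UNIV. \<Sum>j\<in>UNIV. g i j)"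
  by (simp add: sum.cartesian_product UNIV_Times_UNIV[symmetric] del: UNIV_Times_UNIV)

lemma fit_pos: "r > 0 \<Longrightarrow> fit r C k > 0" by (simp add: fit_def)
lemma fit1[simp]: "fit 1 C = (\<lambda>_. 1)" by (auto simp: fit_def)

locale wg =
  fixes W :: "'v::finite \<Rightarrow> 'v \<Rightarrow> real"
  assumes wm: "weight_matrix W" and sc: "strongly_connected W"
begin

lemma W_nonneg: "W i j \<ge> 0" using wm by (simp add: weight_matrix_def)
lemma W_row: "(\<Sum>j\<in>UNIV. W i j) = 1" using wm by (simp add: weight_matrix_def)

lemma row_ex: "\<exists>q. W i q > 0"
proof (rule ccontr)
  assume "\<not> ?thesis"
  then have "\<forall>q. W i q = 0" using W_nonneg by (metis not_less order_antisym)
  then show False using W_row[of i] by simp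
qed

lemma col_ex: "\<exists>q. W q j > 0"
proof (rule ccontr)
  assume nx: "\<not> ?thesis"
  show False
  proof (cases "\<exists>i. i \<noteq> j")
    case True
    then obtain i where "i \<noteq> j" by blast
    moreover have "(i, j) \<in> (edges W)\<^sup>*" using sc by (simp add: strongly_connected_def)
    ultimately obtain k where "(k, j) \<in> edges W" by (metis rtranclE)
    then show False using nx by (auto simp: edges_def)
  next
    case False
    then have "UNIV = {j}" by auto
    then have "sum (W j) UNIV = sum (W j) {j}" by simp
    then have "W j j = 1" using W_row[of j] by simp
    then show False using nx by (metis zero_less_one)
  qed
qed

lemma pos_sum_ex:
  fixes g :: "'a::finite \<Rightarrow> real"
  assumes "\<And>x. g x \<ge> 0" "g a > 0" shows "(\<Sum>x\<in>UNIV. g x) > 0"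
  by (rule sum_pos2[of UNIV a]) (use assms in auto)

lemma col_pos: "(\<Sum>q\<in>UNIV. W q j) > 0"
proof -
  obtain q where q: "W q j > 0" using col_ex by blast
  show ?thesis by (rule pos_sum_ex[of _ q]) (use q W_nonneg in auto)
qed

lemma S_pos: assumes r: "r > 0" shows "(\<Sum>q\<in>UNIV. W i q / fit r C q) > 0"
proof -
  obtain q where q: "W i q > 0" using row_ex by blast
  show ?thesis
  proof (rule pos_sum_ex[of _ q])
    fix x show "0 \<le> W i x / fit r C x" using W_nonneg[of i x] fit_pos[OF r, of C x] by simp
  next
    show "0 < W i q / fit r C q" using q fit_pos[OF r, of C q] by simp
  qed
qed

lemma T_pos: assumes r: "r > 0" shows "(\<Sum>q\<in>UNIV. W q j * fit r C q) > 0"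
proof -
  obtain q where q: "W q j > 0" using col_ex by blast
  show ?thesis
  proof (rule pos_sum_ex[of _ q])
    fix x show "0 \<le> W x j * fit r C x" using W_nonneg[of x j] fit_pos[OF r, of C x] by simp
  next
    show "0 < W q j * fit r C q" using q fit_pos[OF r, of C q] by simp
  qed
qed

lemma F_pos: assumes "r > 0" shows "(\<Sum>k\<in>UNIV. fit r C (k::'v)) > 0"
  using pos_sum_ex[of "fit r C" undefined] fit_pos[OF assms] by (meson less_imp_le)

lemma Z_pos: assumes r: "r > 0" shows "(\<Sum>k\<in>UNIV. 1 / fit r C (k::'v)) > 0"
proof (rule pos_sum_ex[of _ undefined])
  fix x show "0 \<le> 1 / fit r C x" using fit_pos[OF r, of C x] by simp
next
  show "0 < 1 / fit r C undefined" using fit_pos[OF r, of C undefined] by simp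
qed

lemma E_eq: "(\<Sum>(q, l)\<in>edges W. W q l * g q) = (\<Sum>q\<in>UNIV. g q)"
proof -
  have "(\<Sum>(q, l)\<in>edges W. W q l * g q) = (\<Sum>(q, l)\<in>UNIV. W q l * g q)"
    by (rule sum.mono_neutral_left) (auto simp: edges_def W_nonneg less_le)
  also have "\<dots> = (\<Sum>q\<in>UNIV. \<Sum>l\<in>UNIV. W q l * g q)" by (rule sum_pairs)
  also have "\<dots> = (\<Sum>q\<in>UNIV. g q)" by (simp add: sum_distrib_right[symmetric] W_row)
  finally show ?thesis .
qed

lemma N_pos: "real (card (UNIV::'v set)) > 0" by (simp add: card_gt_0_iff)

lemma E_pos: "r > 0 \<Longrightarrow> (\<Sum>(q, l)\<in>edges W. W q l * fit r C q) > 0"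
  by (simp only: E_eq F_pos)

lemma cW_pos: "0 < (\<Sum>q\<in>UNIV. W q j)" by (rule col_pos)

lemma pp_nonneg: assumes "r > 0" shows "pair_prob rl W r C i j \<ge> 0"
  using fit_pos[OF assms, of C] S_pos[OF assms, of i C] T_pos[OF assms, of j C] F_pos[OF assms, of C]
    Z_pos[OF assms, of C] E_pos[OF assms, of C] col_pos[of j] W_nonneg[of i j]
  by (cases rl) (auto simp: pair_prob_def Let_def intro!: mult_nonneg_nonneg divide_nonneg_nonneg dest: less_imp_le)

lemma pp_pos: assumes "r > 0" "W i j > 0" shows "pair_prob rl W r C i j > 0"
  using fit_pos[OF assms(1), of C] S_pos[OF assms(1), of i C] T_pos[OF assms(1), of j C] F_pos[OF assms(1), of C]
    Z_pos[OF assms(1), of C] E_pos[OF assms(1), of C] col_pos[of j] assms(2)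
  by (cases rl) (auto simp: pair_prob_def Let_def intro!: mult_pos_pos divide_pos_pos simp: card_gt_0_iff)

lemma pp_sum: assumes r: "r > 0" shows "(\<Sum>i\<in>UNIV. \<Sum>j\<in>UNIV. pair_prob rl W r C i j) = 1"
proof -
  let ?f = "fit r C"
  let ?N = "real (card (UNIV::'v set))"
  show ?thesis
  proof (cases rl)
    case BD_B
    have "(\<Sum>i\<in>UNIV. \<Sum>j\<in>UNIV. pair_prob rl W r C i j) = (\<Sum>i\<in>UNIV. ?f i / sum ?f UNIV * (\<Sum>j\<in>UNIV. W i j))"
      by (simp add: BD_B pair_prob_def Let_def sum_distrib_left)
    also have "\<dots> = (\<Sum>i\<in>UNIV. ?f i) / sum ?f UNIV" by (simp add: W_row sum_divide_distrib[symmetric])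
    also have "\<dots> = 1" using F_pos[OF r, of C] by simp
    finally show ?thesis .
  next
    case BD_D
    have "(\<Sum>j\<in>UNIV. pair_prob rl W r C i j) = (1/?N) * ((\<Sum>j\<in>UNIV. W i j / ?f j) / (\<Sum>q\<in>UNIV. W i q / ?f q))" for i
      by (simp only: BD_D pair_prob_def Let_def rule.case sum_distrib_left[symmetric] sum_divide_distrib[symmetric])
    then have "(\<Sum>i\<in>UNIV. \<Sum>j\<in>UNIV. pair_prob rl W r C i j) = (\<Sum>i\<in>UNIV. (1/?N) * ((\<Sum>j\<in>UNIV. W i j / ?f j) / (\<Sum>q\<in>UNIV. W i q / ?f q)))"
      by simp
    also have "\<dots> = (\<Sum>i\<in>(UNIV::'v set). (1/?N))"
    proof -
      have eq: "(1/?N) * ((\<Sum>j\<in>UNIV. W i j / ?f j) / (\<Sum>q\<in>UNIV. W i q / ?f q)) = 1/?N" for i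
      proof -
        have "(\<Sum>q\<in>UNIV. W i q / ?f q) \<noteq> 0" using S_pos[OF r, of i C] by simp
        then show ?thesis by simp
      qed
      show ?thesis by (simp only: eq)
    qed
    also have "\<dots> = 1" using N_pos by simp
    finally show ?thesis .
  next
    case DB_B
    have "(\<Sum>i\<in>UNIV. \<Sum>j\<in>UNIV. pair_prob rl W r C i j) = (\<Sum>j\<in>UNIV. \<Sum>i\<in>UNIV. pair_prob rl W r C i j)"
      by (rule sum.swap)
    also have "\<dots> = (\<Sum>j\<in>UNIV. (1/?N) * ((\<Sum>i\<in>UNIV. W i j * ?f i) / (\<Sum>q\<in>UNIV. W q j * ?f q)))"
    proof -
      have "(\<Sum>i\<in>UNIV. pair_prob rl W r C i j) = (1/?N) * ((\<Sum>i\<in>UNIV. W i j * ?f i) / (\<Sum>q\<in>UNIV. W q j * ?f q))" for j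
        by (simp only: DB_B pair_prob_def Let_def rule.case sum_distrib_left[symmetric] sum_divide_distrib[symmetric])
      then show ?thesis by simp
    qed
    also have "\<dots> = (\<Sum>j\<in>(UNIV::'v set). (1/?N))"
    proof -
      have eq: "(1/?N) * ((\<Sum>i\<in>UNIV. W i j * ?f i) / (\<Sum>q\<in>UNIV. W q j * ?f q)) = 1/?N" for j
      proof -
        have "(\<Sum>q\<in>UNIV. W q j * ?f q) \<noteq> 0" using T_pos[OF r, of j C] by simp
        then show ?thesis by simp
      qed
      show ?thesis by (simp only: eq)
    qed
    also have "\<dots> = 1" using N_pos by simp
    finally show ?thesis .
  next
    case DB_D
    have "(\<Sum>i\<in>UNIV. \<Sum>j\<in>UNIV. pair_prob rl W r C i j) = (\<Sum>j\<in>UNIV. \<Sum>i\<in>UNIV. pair_prob rl W r C i j)"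
      by (rule sum.swap)
    also have "\<dots> = (\<Sum>j\<in>UNIV. ((1 / ?f j) / (\<Sum>k\<in>UNIV. 1 / ?f k)) * ((\<Sum>i\<in>UNIV. W i j) / (\<Sum>q\<in>UNIV. W q j)))"
    proof -
      have "(\<Sum>i\<in>UNIV. pair_prob rl W r C i j) = ((1 / ?f j) / (\<Sum>k\<in>UNIV. 1 / ?f k)) * ((\<Sum>i\<in>UNIV. W i j) / (\<Sum>q\<in>UNIV. W q j))" for j
        by (simp only: DB_D pair_prob_def Let_def rule.case sum_distrib_left[symmetric] sum_divide_distrib[symmetric])
      then show ?thesis by simp
    qed
    also have "\<dots> = (\<Sum>j\<in>UNIV. ((1 / ?f j) / (\<Sum>k\<in>UNIV. 1 / ?f k)))"
    proof -
      have eq: "((1 / ?f j) / (\<Sum>k\<in>UNIV. 1 / ?f k)) * ((\<Sum>i\<in>UNIV. W i j) / (\<Sum>q\<in>UNIV. W q j)) = ((1 / ?f j) / (\<Sum>k\<in>UNIV. 1 / ?f k))" for j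
      proof -
        have "(\<Sum>q\<in>UNIV. W q j) \<noteq> 0" using col_pos[of j] by simp
        then show ?thesis by simp
      qed
      show ?thesis by (simp only: eq)
    qed
    also have "\<dots> = (\<Sum>j\<in>UNIV. (1 / ?f j)) / (\<Sum>k\<in>UNIV. 1 / ?f k)"
      by (simp only: sum_divide_distrib)
    also have "\<dots> = 1" using Z_pos[OF r, of C] by simp
    finally show ?thesis .
  next
    case LD
    have "(\<Sum>i\<in>UNIV. \<Sum>j\<in>UNIV. pair_prob rl W r C i j) = (\<Sum>i\<in>UNIV. ?f i * (\<Sum>j\<in>UNIV. W i j)) / sum ?f UNIV"
      by (simp add: LD pair_prob_def Let_def sum_distrib_left sum_divide_distrib E_eq mult.commute)
    also have "\<dots> = 1" using F_pos[OF r, of C] by (simp add: W_row)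
    finally show ?thesis .
  qed
qed

end


lemma replace_UNIV[simp]: "replace UNIV i j = UNIV" by (simp add: replace_def)
lemma replace_empty[simp]: "replace {} i j = {}" by (simp add: replace_def)

lemma if_mult0: "(if P then a else 0) * (b::real) = (if P then a * b else 0)" by simp

lemma tp_pairs: "trans_prob rl W r C D = (\<Sum>i\<in>UNIV. \<Sum>j\<in>UNIV. if replace C i j = D then pair_prob rl W r C i j else 0)"
  unfolding trans_prob_def by (rule sum_pairs)

lemma tp_expect: "(\<Sum>D\<in>UNIV. trans_prob rl W r C D * g D) = (\<Sum>i\<in>UNIV. \<Sum>j\<in>UNIV. pair_prob rl W r C i j * g (replace C i j))"
proof -
  have "(\<Sum>D\<in>UNIV. trans_prob rl W r C D * g D) = (\<Sum>D\<in>UNIV. \<Sum>i\<in>UNIV. \<Sum>j\<in>UNIV. if replace C i j = D then pair_prob rl W r C i j * g D else 0)"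
    by (simp add: tp_pairs sum_distrib_right if_mult0)
  also have "\<dots> = (\<Sum>i\<in>UNIV. \<Sum>D\<in>UNIV. \<Sum>j\<in>UNIV. if replace C i j = D then pair_prob rl W r C i j * g D else 0)"
    by (rule sum.swap)
  also have "\<dots> = (\<Sum>i\<in>UNIV. \<Sum>j\<in>UNIV. \<Sum>D\<in>UNIV. if replace C i j = D then pair_prob rl W r C i j * g D else 0)"
    by (rule sum.cong[OF refl], rule sum.swap)
  also have "\<dots> = (\<Sum>i\<in>UNIV. \<Sum>j\<in>UNIV. pair_prob rl W r C i j * g (replace C i j))"
    by simp
  finally show ?thesis .
qed

context wg begin

lemma tp_nonneg: "r > 0 \<Longrightarrow> trans_prob rl W r C D \<ge> 0"
  unfolding tp_pairs by (auto intro!: sum_nonneg pp_nonneg)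

lemma tp_sum: "r > 0 \<Longrightarrow> (\<Sum>D\<in>UNIV. trans_prob rl W r C D) = 1"
  using tp_expect[of rl W r C "\<lambda>_. 1"] pp_sum by simp

lemma tp_ge: assumes "r > 0" shows "trans_prob rl W r C (replace C i j) \<ge> pair_prob rl W r C i j"
proof -
  have "pair_prob rl W r C i j = (if replace C i j = replace C i j then pair_prob rl W r C i j else 0)" by simp
  also have "\<dots> \<le> (\<Sum>j'\<in>UNIV. if replace C i j' = replace C i j then pair_prob rl W r C i j' else 0)"
    by (rule member_le_sum[where f="\<lambda>j'. if replace C i j' = replace C i j then pair_prob rl W r C i j' else 0"])
       (auto intro: pp_nonneg[OF assms])
  also have "\<dots> \<le> trans_prob rl W r C (replace C i j)" unfolding tp_pairs
    by (rule member_le_sum) (auto intro!: sum_nonneg pp_nonneg[OF assms])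
  finally show ?thesis .
qed

lemma tp_UNIV: "r > 0 \<Longrightarrow> trans_prob rl W r UNIV D = (if D = UNIV then 1 else 0)"
  using pp_sum[of r rl UNIV] by (simp add: tp_pairs sum_distrib_left[symmetric])

lemma tp_empty: "r > 0 \<Longrightarrow> trans_prob rl W r {} D = (if D = {} then 1 else 0)"
  using pp_sum[of r rl "{}"] by (simp add: tp_pairs)

lemma cd_nonneg: "r > 0 \<Longrightarrow> config_dist rl W r C t D \<ge> 0"
  by (induction t arbitrary: D) (auto intro!: sum_nonneg mult_nonneg_nonneg tp_nonneg)

lemma cd_expect: "(\<Sum>D\<in>UNIV. config_dist rl W r C (Suc t) D * g D) = (\<Sum>D'\<in>UNIV. config_dist rl W r C t D' * (\<Sum>D\<in>UNIV. trans_prob rl W r D' D * g D))"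
  by (simp add: sum_distrib_right sum_distrib_left mult.assoc) (rule sum.swap)

lemma cd_sum: "r > 0 \<Longrightarrow> (\<Sum>D\<in>UNIV. config_dist rl W r C t D) = 1"
proof (induction t)
  case 0 then show ?case by simp
next
  case (Suc t)
  then show ?case using cd_expect[of rl r C t "\<lambda>_. 1"] tp_sum[OF Suc.prems] by simp
qed

lemma cd_ck: "config_dist rl W r C (s + t) D = (\<Sum>E\<in>UNIV. config_dist rl W r C s E * config_dist rl W r E t D)"
proof (induction t arbitrary: D)
  case 0 then show ?case by (simp add: if_distrib cong: if_cong)
next
  case (Suc t)
  have "config_dist rl W r C (s + Suc t) D = (\<Sum>D'\<in>UNIV. (\<Sum>E\<in>UNIV. config_dist rl W r C s E * config_dist rl W r E t D') * trans_prob rl W r D' D)"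
    by (simp add: Suc)
  also have "\<dots> = (\<Sum>E\<in>UNIV. config_dist rl W r C s E * config_dist rl W r E (Suc t) D)"
    by (simp add: sum_distrib_right sum_distrib_left mult.assoc) (rule sum.swap)
  finally show ?case .
qed

lemma cd_one: "config_dist rl W r C (Suc 0) E = trans_prob rl W r C E"
  by (simp add: if_mult0)

lemma cd_first: "config_dist rl W r C (Suc t) D = (\<Sum>E\<in>UNIV. trans_prob rl W r C E * config_dist rl W r E t D)"
proof -
  have "Suc t = Suc 0 + t" by simp
  then show ?thesis by (simp only: cd_ck cd_one)
qed

end


context wg begin

lemma fit_ge1: "r \<ge> 1 \<Longrightarrow> fit r C k \<ge> 1" by (simp add: fit_def)
lemma fit_le: "r \<ge> 1 \<Longrightarrow> fit r C k \<le> r" by (simp add: fit_def)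

lemma S_le: assumes "r \<ge> 1" shows "(\<Sum>q\<in>UNIV. W i q / fit r C q) \<le> 1"
proof -
  have "(\<Sum>q\<in>UNIV. W i q / fit r C q) \<le> (\<Sum>q\<in>UNIV. W i q)"
  proof (rule sum_mono)
    fix q show "W i q / fit r C q \<le> W i q"
      using fit_ge1[OF assms, of C q] W_nonneg[of i q] by (simp add: divide_le_eq mult_le_cancel_left1)
  qed
  then show ?thesis by (simp add: W_row)
qed

lemma S_ge: assumes "r \<ge> 1" shows "(\<Sum>q\<in>UNIV. W i q / fit r C q) \<ge> 1 / r"
proof -
  have "(\<Sum>q\<in>UNIV. W i q / r) \<le> (\<Sum>q\<in>UNIV. W i q / fit r C q)"
  proof (rule sum_mono)
    fix q show "W i q / r \<le> W i q / fit r C q"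
      using fit_le[OF assms, of C q] fit_pos[of r C q] assms W_nonneg[of i q] by (intro divide_left_mono) auto
  qed
  then show ?thesis by (simp add: W_row sum_divide_distrib[symmetric])
qed

lemma T_le: assumes "r \<ge> 1" shows "(\<Sum>q\<in>UNIV. W q j * fit r C q) \<le> r * (\<Sum>q\<in>UNIV. W q j)"
  unfolding sum_distrib_left
proof (rule sum_mono)
  fix q show "W q j * fit r C q \<le> r * W q j"
    using mult_left_mono[OF fit_le[OF assms, of C q] W_nonneg[of q j]] by (simp add: mult.commute)
qed

lemma T_ge: assumes "r \<ge> 1" shows "(\<Sum>q\<in>UNIV. W q j * fit r C q) \<ge> (\<Sum>q\<in>UNIV. W q j)"
proof (rule sum_mono)
  fix q show "W q j \<le> W q j * fit r C q"
    using mult_left_mono[OF fit_ge1[OF assms, of C q] W_nonneg[of q j]] by simp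
qed

definition "kprop rl r C \<kappa> \<longleftrightarrow> \<kappa> \<ge> 0 \<and> (\<forall>i j. (i\<in>C \<and> j\<notin>C \<longrightarrow> \<kappa> * pair_prob rl W 1 C i j \<le> pair_prob rl W r C i j) \<and>
   (i\<notin>C \<and> j\<in>C \<longrightarrow> pair_prob rl W r C i j \<le> \<kappa> * pair_prob rl W 1 C i j))"

lemma aux2: "(w::real) \<ge> 0 \<Longrightarrow> r > 0 \<Longrightarrow> 0 < S \<Longrightarrow> S \<ge> 1 / r \<Longrightarrow> (w / r) / S \<le> w"
proof -
  assume a: "w \<ge> 0" "r > 0" "0 < S" "S \<ge> 1 / r"
  have "1 \<le> r * S" using a by (simp add: divide_le_eq mult.commute)
  then have "w / (r * S) \<le> w / 1" using a by (intro divide_left_mono) auto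
  then show ?thesis by (simp add: divide_divide_eq_left)
qed
lemma aux3: "(w::real) \<ge> 0 \<Longrightarrow> c > 0 \<Longrightarrow> 0 < T \<Longrightarrow> T \<le> r * c \<Longrightarrow> r > 0 \<Longrightarrow> w / c \<le> w * r / T"
proof -
  assume a: "w \<ge> 0" "c > 0" "0 < T" "T \<le> r * c" and r: "r > 0"
  have "T / r \<le> c" using a r by (simp add: divide_le_eq mult.commute)
  then have "w / c \<le> w / (T / r)" using a r by (intro divide_left_mono) auto
  then show ?thesis by simp
qed
lemma aux4: "(w::real) \<ge> 0 \<Longrightarrow> F > 0 \<Longrightarrow> r \<ge> 1 \<Longrightarrow> w / F \<le> r * w / F"
  by (intro divide_right_mono) (auto simp: mult_right_mono[of 1 r w, simplified])
lemma aux1: "(w::real) \<ge> 0 \<Longrightarrow> 0 < S \<Longrightarrow> S \<le> 1 \<Longrightarrow> w \<le> w / S"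
  by (simp add: le_divide_eq mult_left_le)

lemma fit_in: "i \<in> C \<Longrightarrow> fit r C i = r" by (simp add: fit_def)
lemma fit_out: "i \<notin> C \<Longrightarrow> fit r C i = 1" by (simp add: fit_def)

lemma Nsum: "(\<Sum>k\<in>(UNIV::'v set). (1::real)) = real (card (UNIV::'v set))" by simp

lemma kappa_BD_B: assumes r: "r \<ge> 1" shows "\<exists>\<kappa>. kprop BD_B r C \<kappa>"
proof -
  let ?N = "real (card (UNIV::'v set))"
  let ?F = "sum (fit r C) UNIV"
  have F: "?F > 0" using F_pos r by simp
  have N: "?N > 0" by (rule N_pos)
  have pr: "pair_prob BD_B W r C i j = fit r C i / ?F * W i j" for i j
    by (simp only: pair_prob_def Let_def rule.case)
  have p0: "pair_prob BD_B W 1 C i j = W i j / ?N" for i j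
    by (simp add: pair_prob_def)
  show ?thesis unfolding kprop_def
  proof (intro exI[of _ "?N / ?F"] conjI allI impI)
    show "?N / ?F \<ge> 0" using F N by simp
    fix i j
    assume "i \<in> C \<and> j \<notin> C"
    then have fi: "fit r C i = r" by (simp add: fit_in)
    have "?N / ?F * pair_prob BD_B W 1 C i j = W i j / ?F" unfolding p0 using N by simp
    also have "\<dots> \<le> r * W i j / ?F" by (rule aux4[OF W_nonneg F r])
    also have "\<dots> = pair_prob BD_B W r C i j" unfolding pr fi by simp
    finally show "?N / ?F * pair_prob BD_B W 1 C i j \<le> pair_prob BD_B W r C i j" .
  next
    fix i j
    assume "i \<notin> C \<and> j \<in> C"
    then have fi: "fit r C i = 1" by (simp add: fit_out)
    have "?N / ?F * pair_prob BD_B W 1 C i j = W i j / ?F" unfolding p0 using N by simp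
    also have "\<dots> = pair_prob BD_B W r C i j" unfolding pr fi by simp
    finally show "pair_prob BD_B W r C i j \<le> ?N / ?F * pair_prob BD_B W 1 C i j" by simp
  qed
qed

lemma kappa_BD_D: assumes r: "r \<ge> 1" shows "\<exists>\<kappa>. kprop BD_D r C \<kappa>"
proof -
  let ?N = "real (card (UNIV::'v set))"
  have N: "?N > 0" by (rule N_pos)
  have pr: "pair_prob BD_D W r C i j = (1 / ?N) * ((W i j / fit r C j) / (\<Sum>q\<in>UNIV. W i q / fit r C q))" for i j
    by (simp only: pair_prob_def Let_def rule.case)
  have p0: "pair_prob BD_D W 1 C i j = (1 / ?N) * W i j" for i j
    by (simp add: pair_prob_def W_row)
  show ?thesis unfolding kprop_def
  proof (intro exI[of _ 1] conjI allI impI)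
    show "(1::real) \<ge> 0" by simp
    fix i j
    let ?S = "(\<Sum>q\<in>UNIV. W i q / fit r C q)"
    have S: "?S > 0" "?S \<le> 1" "?S \<ge> 1/r" using S_pos[of r i C] S_le[OF r, of i C] S_ge[OF r, of i C] r by auto
    have N': "1 / ?N \<ge> 0" using N by simp
    {
      assume "i \<in> C \<and> j \<notin> C"
      then have fj: "fit r C j = 1" by (simp add: fit_out)
      show "1 * pair_prob BD_D W 1 C i j \<le> pair_prob BD_D W r C i j"
        unfolding pr p0 fj using mult_left_mono[OF aux1[OF W_nonneg[of i j] S(1,2)] N'] by simp
    }
    {
      assume "i \<notin> C \<and> j \<in> C"
      then have fj: "fit r C j = r" by (simp add: fit_in)
      show "pair_prob BD_D W r C i j \<le> 1 * pair_prob BD_D W 1 C i j"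
        unfolding pr p0 fj using mult_left_mono[OF aux2[OF W_nonneg[of i j] _ S(1,3)] N'] r by simp
    }
  qed
qed

lemma kappa_DB_B: assumes r: "r \<ge> 1" shows "\<exists>\<kappa>. kprop DB_B r C \<kappa>"
proof -
  let ?N = "real (card (UNIV::'v set))"
  have N: "?N > 0" by (rule N_pos)
  have pr: "pair_prob DB_B W r C i j = (1 / ?N) * ((W i j * fit r C i) / (\<Sum>q\<in>UNIV. W q j * fit r C q))" for i j
    by (simp only: pair_prob_def Let_def rule.case)
  have p0: "pair_prob DB_B W 1 C i j = (1 / ?N) * (W i j / (\<Sum>q\<in>UNIV. W q j))" for i j
    by (simp add: pair_prob_def)
  show ?thesis unfolding kprop_def
  proof (intro exI[of _ 1] conjI allI impI)
    show "(1::real) \<ge> 0" by simp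
    fix i j
    let ?T = "(\<Sum>q\<in>UNIV. W q j * fit r C q)"
    let ?c = "(\<Sum>q\<in>UNIV. W q j)"
    have T: "?T > 0" "?T \<le> r * ?c" "?T \<ge> ?c" "?c > 0"
      using T_pos[of r j C] T_le[OF r, of j C] T_ge[OF r, of j C] r col_pos[of j] by auto
    have N': "1 / ?N \<ge> 0" using N by simp
    {
      assume "i \<in> C \<and> j \<notin> C"
      then have fi: "fit r C i = r" by (simp add: fit_in)
      show "1 * pair_prob DB_B W 1 C i j \<le> pair_prob DB_B W r C i j"
        unfolding pr p0 fi using mult_left_mono[OF aux3[OF W_nonneg[of i j] T(4,1,2)] N'] r by simp
    }
    {
      assume "i \<notin> C \<and> j \<in> C"
      then have fi: "fit r C i = 1" by (simp add: fit_out)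
      have "W i j / ?T \<le> W i j / ?c" using T W_nonneg[of i j] by (intro divide_left_mono) auto
      then have h: "(1 / ?N) * (W i j / ?T) \<le> (1 / ?N) * (W i j / ?c)"
        by (rule mult_left_mono[OF _ N'])
      show "pair_prob DB_B W r C i j \<le> 1 * pair_prob DB_B W 1 C i j"
        unfolding pr p0 fi mult_1_right mult_1_left by (rule h)
    }
  qed
qed

lemma kappa_DB_D: assumes r: "r \<ge> 1" shows "\<exists>\<kappa>. kprop DB_D r C \<kappa>"
proof -
  let ?N = "real (card (UNIV::'v set))"
  let ?Z = "(\<Sum>k\<in>UNIV. 1 / fit r C k)"
  have N: "?N > 0" by (rule N_pos)
  have Z: "?Z > 0" using Z_pos r by simp
  have pr: "pair_prob DB_D W r C i j = ((1 / fit r C j) / ?Z) * (W i j / (\<Sum>q\<in>UNIV. W q j))" for i j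
    by (simp only: pair_prob_def Let_def rule.case)
  have p0: "pair_prob DB_D W 1 C i j = (1 / ?N) * (W i j / (\<Sum>q\<in>UNIV. W q j))" for i j
    by (simp add: pair_prob_def)
  show ?thesis unfolding kprop_def
  proof (intro exI[of _ "?N / (r * ?Z)"] conjI allI impI)
    show "?N / (r * ?Z) \<ge> 0" using N Z r by simp
    fix i j
    let ?c = "(\<Sum>q\<in>UNIV. W q j)"
    have c: "?c > 0" by (rule col_pos)
    have w: "W i j / ?c \<ge> 0" using c W_nonneg[of i j] by simp
    have k: "?N / (r * ?Z) * (1 / ?N) = 1 / r / ?Z" using N by simp
    {
      assume "i \<in> C \<and> j \<notin> C"
      then have fj: "fit r C j = 1" by (simp add: fit_out)
      have "1 / r / ?Z \<le> 1 / ?Z" using r Z by (intro divide_right_mono) auto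
      then have "1 / r / ?Z * (W i j / ?c) \<le> 1 / ?Z * (W i j / ?c)" using w by (rule mult_right_mono)
      then show "?N / (r * ?Z) * pair_prob DB_D W 1 C i j \<le> pair_prob DB_D W r C i j"
        unfolding pr p0 fj mult.assoc[symmetric] k by simp
    }
    {
      assume "i \<notin> C \<and> j \<in> C"
      then have fj: "fit r C j = r" by (simp add: fit_in)
      show "pair_prob DB_D W r C i j \<le> ?N / (r * ?Z) * pair_prob DB_D W 1 C i j"
        unfolding pr p0 fj mult.assoc[symmetric] k by simp
    }
  qed
qed

lemma kappa_LD: assumes r: "r \<ge> 1" shows "\<exists>\<kappa>. kprop LD r C \<kappa>"
proof -
  let ?N = "real (card (UNIV::'v set))"
  let ?F = "sum (fit r C) UNIV"
  have F: "?F > 0" using F_pos r by simp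
  have N: "?N > 0" by (rule N_pos)
  have E1: "(\<Sum>(q, l)\<in>edges W. W q l * fit 1 C q) = ?N" using E_eq[of "\<lambda>_. 1"] by simp
  have Er: "(\<Sum>(q, l)\<in>edges W. W q l * fit r C q) = ?F" using E_eq[of "fit r C"] by simp
  have pr: "pair_prob LD W r C i j = (W i j * fit r C i) / ?F" for i j
    by (simp only: pair_prob_def Let_def rule.case Er)
  have p0: "pair_prob LD W 1 C i j = W i j / ?N" for i j
  proof -
    have "pair_prob LD W 1 C i j = (W i j * fit 1 C i) / ?N"
      by (simp only: pair_prob_def Let_def rule.case E1)
    then show ?thesis by simp
  qed
  show ?thesis unfolding kprop_def
  proof (intro exI[of _ "?N / ?F"] conjI allI impI)
    show "?N / ?F \<ge> 0" using F N by simp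
    fix i j
    {
      assume "i \<in> C \<and> j \<notin> C"
      then have fi: "fit r C i = r" by (simp add: fit_in)
      have "?N / ?F * pair_prob LD W 1 C i j = W i j / ?F" unfolding p0 using N by simp
      also have "\<dots> \<le> r * W i j / ?F" by (rule aux4[OF W_nonneg F r])
      also have "\<dots> = pair_prob LD W r C i j" unfolding pr fi by (simp add: mult.commute)
      finally show "?N / ?F * pair_prob LD W 1 C i j \<le> pair_prob LD W r C i j" .
    }
    {
      assume "i \<notin> C \<and> j \<in> C"
      then have fi: "fit r C i = 1" by (simp add: fit_out)
      have "?N / ?F * pair_prob LD W 1 C i j = W i j / ?F" unfolding p0 using N by simp
      also have "\<dots> = pair_prob LD W r C i j" unfolding pr fi by simp
      finally show "pair_prob LD W r C i j \<le> ?N / ?F * pair_prob LD W 1 C i j" by simp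
    }
  qed
qed

lemma kappa: assumes r: "r \<ge> 1" shows "\<exists>\<kappa>. kprop rl r C \<kappa>"
  using kappa_BD_B[OF r] kappa_BD_D[OF r] kappa_DB_B[OF r] kappa_DB_D[OF r] kappa_LD[OF r]
  by (cases rl) auto

end


context wg begin

lemma pp1_indep: "pair_prob rl W 1 C i j = pair_prob rl W 1 {} i j"
  by (simp add: pair_prob_def)

definition psi :: "('v \<Rightarrow> real) \<Rightarrow> 'v set \<Rightarrow> real" where "psi \<pi> D = (\<Sum>k\<in>D. \<pi> k)"
definition dl :: "('v \<Rightarrow> real) \<Rightarrow> 'v set \<Rightarrow> 'v \<Rightarrow> 'v \<Rightarrow> real" where
  "dl \<pi> C i j = (if i\<in>C \<and> j\<notin>C then \<pi> j else 0) - (if i\<notin>C \<and> j\<in>C then \<pi> j else 0)"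

lemma psi_replace: "psi \<pi> (replace C i j) = psi \<pi> C + dl \<pi> C i j"
  by (auto simp: psi_def dl_def replace_def insert_absorb sum_diff1)

lemma step_expect: assumes "r > 0"
  shows "(\<Sum>D\<in>UNIV. trans_prob rl W r C D * psi \<pi> D) = psi \<pi> C + (\<Sum>i\<in>UNIV. \<Sum>j\<in>UNIV. pair_prob rl W r C i j * dl \<pi> C i j)"
proof -
  have "(\<Sum>D\<in>UNIV. trans_prob rl W r C D * psi \<pi> D) = (\<Sum>i\<in>UNIV. \<Sum>j\<in>UNIV. pair_prob rl W r C i j * (psi \<pi> C + dl \<pi> C i j))"
    unfolding tp_expect psi_replace ..
  also have "\<dots> = (\<Sum>i\<in>UNIV. \<Sum>j\<in>UNIV. pair_prob rl W r C i j) * psi \<pi> C + (\<Sum>i\<in>UNIV. \<Sum>j\<in>UNIV. pair_prob rl W r C i j * dl \<pi> C i j)"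
    by (simp only: distrib_left sum.distrib sum_distrib_right[symmetric])
  finally show ?thesis using pp_sum[OF assms] by simp
qed

lemma neutral_drift:
  fixes p :: "'v \<Rightarrow> 'v \<Rightarrow> real"
  assumes bal: "\<And>i. (\<Sum>j\<in>UNIV. p i j * \<pi> j) = \<pi> i * (\<Sum>j\<in>UNIV. p j i)"
  shows "(\<Sum>i\<in>UNIV. \<Sum>j\<in>UNIV. p i j * dl \<pi> C i j) = 0"
proof -
  define a where "a i j = p i j * \<pi> j - p j i * \<pi> i" for i j
  define ci where "ci i = (if i \<in> C then 1 else 0 :: real)" for i
  have a0: "(\<Sum>j\<in>UNIV. a i j) = 0" for i using bal[of i] by (simp add: a_def sum_subtractf sum_distrib_left mult.commute)
  have dl': "p i j * dl \<pi> C i j = ci i * (1 - ci j) * p i j * \<pi> j - ci j * (1 - ci i) * p i j * \<pi> j" for i j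
    by (simp add: dl_def ci_def)
  have sw: "(\<Sum>i\<in>UNIV. \<Sum>j\<in>UNIV. ci j * (1 - ci i) * p i j * \<pi> j) = (\<Sum>i\<in>UNIV. \<Sum>j\<in>UNIV. ci i * (1 - ci j) * p j i * \<pi> i)"
    by (rule sum.swap)
  have "(\<Sum>i\<in>UNIV. \<Sum>j\<in>UNIV. p i j * dl \<pi> C i j) =
      (\<Sum>i\<in>UNIV. \<Sum>j\<in>UNIV. ci i * (1 - ci j) * p i j * \<pi> j) - (\<Sum>i\<in>UNIV. \<Sum>j\<in>UNIV. ci j * (1 - ci i) * p i j * \<pi> j)"
    unfolding dl' by (simp only: sum_subtractf)
  also have "\<dots> = (\<Sum>i\<in>UNIV. \<Sum>j\<in>UNIV. ci i * (1 - ci j) * p i j * \<pi> j) - (\<Sum>i\<in>UNIV. \<Sum>j\<in>UNIV. ci i * (1 - ci j) * p j i * \<pi> i)"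
    unfolding sw ..
  also have "\<dots> = (\<Sum>i\<in>UNIV. \<Sum>j\<in>UNIV. ci i * (1 - ci j) * p i j * \<pi> j - ci i * (1 - ci j) * p j i * \<pi> i)"
    by (simp only: sum_subtractf)
  also have "\<dots> = (\<Sum>i\<in>UNIV. \<Sum>j\<in>UNIV. ci i * (1 - ci j) * a i j)"
    by (simp only: a_def right_diff_distrib mult.assoc)
  also have "\<dots> = (\<Sum>i\<in>UNIV. ci i * (\<Sum>j\<in>UNIV. a i j)) - (\<Sum>i\<in>UNIV. \<Sum>j\<in>UNIV. ci i * ci j * a i j)"
    by (simp add: algebra_simps sum_subtractf sum_distrib_left)
  also have "(\<Sum>i\<in>UNIV. \<Sum>j\<in>UNIV. ci i * ci j * a i j) = 0"
  proof -
    have "(\<Sum>i\<in>UNIV. \<Sum>j\<in>UNIV. ci i * ci j * a i j) = (\<Sum>i\<in>UNIV. \<Sum>j\<in>UNIV. ci j * ci i * a j i)"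
      by (rule sum.swap)
    also have "\<dots> = - (\<Sum>i\<in>UNIV. \<Sum>j\<in>UNIV. ci i * ci j * a i j)"
      by (simp add: a_def algebra_simps sum_negf[symmetric])
    finally show ?thesis by simp
  qed
  finally show ?thesis by (simp add: a0)
qed

lemma r_drift:
  assumes r: "r \<ge> 1" and pin: "\<And>i. \<pi> i \<ge> 0"
    and bal: "\<And>i. (\<Sum>j\<in>UNIV. pair_prob rl W 1 {} i j * \<pi> j) = \<pi> i * (\<Sum>j\<in>UNIV. pair_prob rl W 1 {} j i)"
  shows "(\<Sum>i\<in>UNIV. \<Sum>j\<in>UNIV. pair_prob rl W r C i j * dl \<pi> C i j) \<ge> 0"
proof -
  obtain \<kappa> where k: "kprop rl r C \<kappa>" using kappa[OF r] by blast
  have "(\<Sum>i\<in>UNIV. \<Sum>j\<in>UNIV. \<kappa> * pair_prob rl W 1 {} i j * dl \<pi> C i j) = \<kappa> * (\<Sum>i\<in>UNIV. \<Sum>j\<in>UNIV. pair_prob rl W 1 {} i j * dl \<pi> C i j)"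
    by (simp add: sum_distrib_left mult.assoc)
  also have "\<dots> = 0" using neutral_drift[of "pair_prob rl W 1 {}" \<pi> C] bal by simp
  finally have z: "(\<Sum>i\<in>UNIV. \<Sum>j\<in>UNIV. \<kappa> * pair_prob rl W 1 {} i j * dl \<pi> C i j) = 0" .
  have "(\<Sum>i\<in>UNIV. \<Sum>j\<in>UNIV. \<kappa> * pair_prob rl W 1 {} i j * dl \<pi> C i j) \<le> (\<Sum>i\<in>UNIV. \<Sum>j\<in>UNIV. pair_prob rl W r C i j * dl \<pi> C i j)"
  proof (intro sum_mono)
    fix i j
    have k1: "i\<in>C \<and> j\<notin>C \<longrightarrow> \<kappa> * pair_prob rl W 1 {} i j \<le> pair_prob rl W r C i j"
     and k2: "i\<notin>C \<and> j\<in>C \<longrightarrow> pair_prob rl W r C i j \<le> \<kappa> * pair_prob rl W 1 {} i j"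
      using k unfolding kprop_def by (auto simp: pp1_indep[of rl C])
    show "\<kappa> * pair_prob rl W 1 {} i j * dl \<pi> C i j \<le> pair_prob rl W r C i j * dl \<pi> C i j"
      using k1 k2 pin[of j] by (auto simp: dl_def intro: mult_right_mono)
  qed
  then show ?thesis using z by simp
qed

end


context wg begin

lemma cd_absorb: assumes "\<And>D. trans_prob rl W r A D = (if D = A then 1 else 0)"
  shows "config_dist rl W r A t D = (if D = A then 1 else 0)"
proof (induction t arbitrary: D)
  case 0 then show ?case by simp
next
  case (Suc t) then show ?case by (simp add: assms if_mult0)
qed

lemma cd0_sum: "(\<Sum>D\<in>UNIV. config_dist rl W r C 0 D * g D) = g C"
  by (simp add: if_mult0)

lemma cd_UNIV: "r > 0 \<Longrightarrow> config_dist rl W r UNIV t D = (if D = UNIV then 1 else 0)"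
  by (rule cd_absorb) (simp add: tp_UNIV)
lemma cd_empty: "r > 0 \<Longrightarrow> config_dist rl W r {} t D = (if D = {} then 1 else 0)"
  by (rule cd_absorb) (simp add: tp_empty)

lemma cd_le1: "r > 0 \<Longrightarrow> config_dist rl W r C t D \<le> 1"
  using member_le_sum[of D UNIV "config_dist rl W r C t"] cd_nonneg cd_sum by simp

lemma ex_step: assumes r: "r > 0"
  shows "(\<Sum>D\<in>UNIV. config_dist rl W r C (Suc t) D * psi \<pi> D) =
    (\<Sum>D\<in>UNIV. config_dist rl W r C t D * psi \<pi> D) +
    (\<Sum>D\<in>UNIV. config_dist rl W r C t D * (\<Sum>i\<in>UNIV. \<Sum>j\<in>UNIV. pair_prob rl W r D i j * dl \<pi> D i j))"
  unfolding cd_expect step_expect[OF r] distrib_left sum.distrib ..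

lemma ex_ge: assumes r: "r \<ge> 1" and pin: "\<And>i. \<pi> i \<ge> 0"
    and bal: "\<And>i. (\<Sum>j\<in>UNIV. pair_prob rl W 1 {} i j * \<pi> j) = \<pi> i * (\<Sum>j\<in>UNIV. pair_prob rl W 1 {} j i)"
  shows "(\<Sum>D\<in>UNIV. config_dist rl W r C t D * psi \<pi> D) \<ge> psi \<pi> C"
proof (induction t)
  case 0 then show ?case by (simp only: cd0_sum order_refl)
next
  case (Suc t)
  have "(\<Sum>D\<in>UNIV. config_dist rl W r C t D * (\<Sum>i\<in>UNIV. \<Sum>j\<in>UNIV. pair_prob rl W r D i j * dl \<pi> D i j)) \<ge> 0"
    using r by (intro sum_nonneg mult_nonneg_nonneg cd_nonneg r_drift[OF r pin bal]) auto
  then show ?case using Suc ex_step[of r rl C t \<pi>] r by simp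
qed

lemma ex_eq: assumes bal: "\<And>i. (\<Sum>j\<in>UNIV. pair_prob rl W 1 {} i j * \<pi> j) = \<pi> i * (\<Sum>j\<in>UNIV. pair_prob rl W 1 {} j i)"
  shows "(\<Sum>D\<in>UNIV. config_dist rl W 1 C t D * psi \<pi> D) = psi \<pi> C"
proof (induction t)
  case 0 then show ?case by (simp only: cd0_sum order_refl)
next
  case (Suc t)
  have "(\<Sum>i\<in>UNIV. \<Sum>j\<in>UNIV. pair_prob rl W 1 D i j * dl \<pi> D i j) = 0" for D
    using neutral_drift[of "pair_prob rl W 1 {}" \<pi> D] bal by (simp add: pp1_indep[of rl D])
  then show ?case using Suc ex_step[of 1 rl C t \<pi>] by simp
qed

lemma cd_UNIV_mono: assumes r: "r > 0" shows "config_dist rl W r C t UNIV \<le> config_dist rl W r C (Suc t) UNIV"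
proof -
  have "config_dist rl W r C t UNIV * trans_prob rl W r UNIV UNIV \<le> (\<Sum>D'\<in>UNIV. config_dist rl W r C t D' * trans_prob rl W r D' UNIV)"
    by (rule member_le_sum) (auto intro!: mult_nonneg_nonneg cd_nonneg tp_nonneg r)
  then show ?thesis using tp_UNIV[OF r] by simp
qed

lemma fix_lim: assumes r: "r > 0"
  shows "(\<lambda>t. config_dist rl W r C t UNIV) \<longlonglongrightarrow> fixation_prob rl W r C"
    and "fixation_prob rl W r C = (SUP t. config_dist rl W r C t UNIV)"
proof -
  have inc: "incseq (\<lambda>t. config_dist rl W r C t UNIV)"
    by (rule incseq_SucI) (rule cd_UNIV_mono[OF r])
  have bdd: "bdd_above (range (\<lambda>t. config_dist rl W r C t UNIV))"
    by (rule bdd_aboveI[where M=1]) (use cd_le1[OF r] in auto)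
  have L: "(\<lambda>t. config_dist rl W r C t UNIV) \<longlonglongrightarrow> (SUP t. config_dist rl W r C t UNIV)"
    by (rule LIMSEQ_incseq_SUP[OF bdd inc])
  then show "fixation_prob rl W r C = (SUP t. config_dist rl W r C t UNIV)"
    unfolding fixation_prob_def by (rule limI)
  with L show "(\<lambda>t. config_dist rl W r C t UNIV) \<longlonglongrightarrow> fixation_prob rl W r C" by simp
qed

end


context wg begin

lemma boundary_edge: assumes "i \<in> D" "j \<notin> D" shows "\<exists>a b. a \<in> D \<and> b \<notin> D \<and> W a b > 0"
proof -
  have "(i, j) \<in> (edges W)\<^sup>*" using sc by (simp add: strongly_connected_def)
  then show ?thesis using assms(2)
  proof (induction rule: rtrancl_induct)
    case base then show ?case using assms(1) by simp
  next
    case (step y z)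
    show ?case
    proof (cases "y \<in> D")
      case True then show ?thesis using step by (auto simp: edges_def)
    next
      case False then show ?thesis using step.IH by blast
    qed
  qed
qed

definition dmin :: "rule \<Rightarrow> real \<Rightarrow> real" where
  "dmin rl r = Min ((\<lambda>(C, i, j). pair_prob rl W r C i j) ` {(C, i, j). W i j > 0})"

lemma dmin_props: assumes r: "r > 0"
  shows "dmin rl r > 0" "dmin rl r \<le> 1" "W i j > 0 \<Longrightarrow> dmin rl r \<le> pair_prob rl W r C i j"
proof -
  let ?S = "(\<lambda>(C, i, j). pair_prob rl W r C i j) ` {(C::'v set, i, j). W i j > 0}"
  have fin: "finite ?S" by simp
  obtain q where q: "W undefined q > 0" using row_ex by blast
  then have ne: "?S \<noteq> {}" by blast
  show "dmin rl r > 0" unfolding dmin_def using fin ne by (auto simp: Min_gr_iff intro!: pp_pos[OF r])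
  show "dmin rl r \<le> pair_prob rl W r C i j" if w: "W i j > 0"
  proof -
    have "pair_prob rl W r C i j \<in> ?S" using w by (intro image_eqI[where x="(C, i, j)"]) auto
    then show ?thesis unfolding dmin_def by (rule Min_le[OF fin])
  qed
  have "pair_prob rl W r {} undefined q \<le> 1"
  proof -
    have "pair_prob rl W r {} undefined q \<le> (\<Sum>j\<in>UNIV. pair_prob rl W r {} undefined j)"
      by (rule member_le_sum) (auto intro: pp_nonneg[OF r])
    also have "\<dots> \<le> (\<Sum>i\<in>UNIV. \<Sum>j\<in>UNIV. pair_prob rl W r {} i j)"
      by (rule member_le_sum[where f="\<lambda>i. \<Sum>j\<in>UNIV. pair_prob rl W r {} i j"]) (auto intro!: sum_nonneg pp_nonneg[OF r])
    finally show ?thesis using pp_sum[OF r] by simp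
  qed
  moreover have "dmin rl r \<le> pair_prob rl W r {} undefined q"
  proof -
    have "pair_prob rl W r {} undefined q \<in> ?S" using q by (intro image_eqI[where x="({}, undefined, q)"]) auto
    then show ?thesis unfolding dmin_def by (rule Min_le[OF fin])
  qed
  ultimately show "dmin rl r \<le> 1" by simp
qed

lemma reach: assumes r: "r > 0"
  shows "D \<noteq> {} \<Longrightarrow> card (- D) \<le> k \<Longrightarrow> config_dist rl W r D k UNIV \<ge> dmin rl r ^ k"
proof (induction k arbitrary: D)
  case 0
  then have "D = UNIV" by auto
  then show ?case using cd_UNIV[OF r] by simp
next
  case (Suc k)
  have d: "0 < dmin rl r" "dmin rl r \<le> 1" using dmin_props[OF r] by auto
  show ?case
  proof (cases "D = UNIV")
    case True
    have c1: "config_dist rl W r UNIV (Suc k) UNIV = 1"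
      using cd_UNIV[OF r, of rl "Suc k" UNIV] by (simp del: config_dist.simps)
    have "dmin rl r ^ Suc k \<le> 1" using d by (intro power_le_one) auto
    then show ?thesis using c1 True by simp
  next
    case False
    then obtain i j where ij: "i \<in> D" "j \<notin> D" "W i j > 0"
      using Suc.prems(1) boundary_edge by blast
    let ?D' = "replace D i j"
    have D': "?D' = insert j D" using ij by (simp add: replace_def)
    have cD': "card (- ?D') \<le> k"
    proof -
      have "- ?D' = (- D) - {j}" using D' by auto
      then have "card (- ?D') = card (- D) - 1" using ij(2) by (simp add: card_Diff_singleton)
      then show ?thesis using Suc.prems(2) by simp
    qed
    have IH: "config_dist rl W r ?D' k UNIV \<ge> dmin rl r ^ k" using Suc.IH[OF _ cD'] D' by simp
    have tp: "trans_prob rl W r D ?D' \<ge> dmin rl r"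
      using tp_ge[OF r, of rl D i j] dmin_props(3)[OF r ij(3), of rl D] by simp
    have "dmin rl r ^ Suc k = dmin rl r * dmin rl r ^ k" by simp
    also have "\<dots> \<le> trans_prob rl W r D ?D' * config_dist rl W r ?D' k UNIV"
      using IH tp d by (intro mult_mono) auto
    also have "\<dots> \<le> (\<Sum>E\<in>UNIV. trans_prob rl W r D E * config_dist rl W r E k UNIV)"
      by (rule member_le_sum[where f="\<lambda>E. trans_prob rl W r D E * config_dist rl W r E k UNIV"])
         (auto intro!: mult_nonneg_nonneg tp_nonneg cd_nonneg r)
    also have "\<dots> = config_dist rl W r D (Suc k) UNIV" by (rule cd_first[symmetric])
    finally show ?thesis .
  qed
qed

end


context wg begin

lemma absorb_step: fixes rl :: rule and r :: real and C :: "'v set" and t :: nat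
  assumes r: "r > 0"
  defines "n \<equiv> card (UNIV::'v set)"
  defines "\<delta> \<equiv> dmin rl r ^ n"
  shows "1 - (config_dist rl W r C (t + n) {} + config_dist rl W r C (t + n) UNIV)
      \<le> (1 - \<delta>) * (1 - (config_dist rl W r C t {} + config_dist rl W r C t UNIV))"
proof -
  let ?cd = "config_dist rl W r C t"
  define h where "h D = (if D = {} \<or> D = UNIV then 1 else \<delta>)" for D :: "'v set"
  have ne: "(UNIV::'v set) \<noteq> {}" by simp
  have hle: "?cd D * h D \<le> ?cd D * (config_dist rl W r D n {} + config_dist rl W r D n UNIV)" for D
  proof (rule mult_left_mono[OF _ cd_nonneg[OF r]])
    show "h D \<le> config_dist rl W r D n {} + config_dist rl W r D n UNIV"
    proof (cases "D = {}")
      case True then show ?thesis using ne by (simp add: h_def cd_empty[OF r])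
    next
      case False
      have "\<delta> \<le> config_dist rl W r D n UNIV" unfolding \<delta>_def
        by (rule reach[OF r False]) (simp add: n_def card_mono)
      moreover have "config_dist rl W r D n {} \<ge> 0" by (rule cd_nonneg[OF r])
      ultimately show ?thesis using False ne by (auto simp: h_def cd_UNIV[OF r])
    qed
  qed
  have "(\<Sum>D\<in>UNIV. ?cd D * h D) = (\<Sum>D\<in>UNIV. \<delta> * ?cd D + (1 - \<delta>) * ((if D = {} then ?cd D else 0) + (if D = UNIV then ?cd D else 0)))"
    by (rule sum.cong[OF refl]) (use ne in \<open>auto simp: h_def algebra_simps\<close>)
  also have "\<dots> = \<delta> + (1 - \<delta>) * (?cd {} + ?cd UNIV)"
    by (simp add: sum.distrib sum_distrib_left[symmetric] cd_sum[OF r])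
  finally have hs: "(\<Sum>D\<in>UNIV. ?cd D * h D) = \<delta> + (1 - \<delta>) * (?cd {} + ?cd UNIV)" .
  have "config_dist rl W r C (t + n) {} + config_dist rl W r C (t + n) UNIV
      = (\<Sum>D\<in>UNIV. ?cd D * (config_dist rl W r D n {} + config_dist rl W r D n UNIV))"
    by (simp only: cd_ck distrib_left sum.distrib)
  also have "\<dots> \<ge> (\<Sum>D\<in>UNIV. ?cd D * h D)" by (rule sum_mono[OF hle])
  finally show ?thesis using hs by (simp add: algebra_simps)
qed

lemma absorb: assumes r: "r > 0" and e: "e > 0"
  shows "\<exists>t. 1 - (config_dist rl W r C t {} + config_dist rl W r C t UNIV) < e"
proof -
  define n where "n = card (UNIV::'v set)"
  define \<delta> where "\<delta> = dmin rl r ^ n"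
  have d0: "0 < dmin rl r" "dmin rl r \<le> 1" using dmin_props[OF r] by auto
  have d: "0 < \<delta>" "\<delta> \<le> 1" unfolding \<delta>_def using d0 by (auto intro: power_le_one)
  define w where "w t = 1 - (config_dist rl W r C t {} + config_dist rl W r C t UNIV)" for t
  have w1: "w t \<le> 1" for t
    using cd_nonneg[OF r, of rl C t "{}"] cd_nonneg[OF r, of rl C t UNIV] by (simp add: w_def)
  have wm: "w (m * n) \<le> (1 - \<delta>) ^ m" for m
  proof (induction m)
    case 0 show ?case using w1 by simp
  next
    case (Suc m)
    have "w (Suc m * n) = w (m * n + n)" by (simp add: add.commute)
    also have "\<dots> \<le> (1 - \<delta>) * w (m * n)" using absorb_step[OF r, of rl C "m * n"]
      by (simp add: w_def n_def \<delta>_def)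
    also have "\<dots> \<le> (1 - \<delta>) * (1 - \<delta>) ^ m" using Suc d by (intro mult_left_mono) auto
    finally show ?case by simp
  qed
  obtain m where "(1 - \<delta>) ^ m < e" using real_arch_pow_inv[OF e, of "1 - \<delta>"] d by auto
  then show ?thesis using wm[of m] unfolding w_def by (intro exI[of _ "m * n"]) simp
qed

lemma psi_le1: assumes "\<And>i. \<pi> i \<ge> 0" "(\<Sum>i\<in>UNIV. \<pi> i) = 1"
  shows "psi \<pi> D \<le> (if D = {} then 0 else 1)"
proof -
  have "psi \<pi> D \<le> (\<Sum>i\<in>UNIV. \<pi> i)" unfolding psi_def by (rule sum_mono2) (auto intro: assms)
  then show ?thesis using assms by (auto simp: psi_def)
qed

theorem main: assumes r: "r > 1" shows "fixation_prob rl W 1 C \<le> fixation_prob rl W r C"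
proof -
  obtain \<pi> where pin: "\<And>i. \<pi> i \<ge> 0" and pis: "(\<Sum>i\<in>UNIV. \<pi> i) = 1"
    and bal: "\<And>i. (\<Sum>j\<in>UNIV. pair_prob rl W 1 {} i j * \<pi> j) = \<pi> i * (\<Sum>j\<in>UNIV. pair_prob rl W 1 {} j i)"
    using balance_exists[of "pair_prob rl W 1 {}"] pp_nonneg[of 1] pp_sum[of 1] by auto
  have psiU: "psi \<pi> UNIV = 1" using pis by (simp add: psi_def)
  have r0: "r > 0" using r by simp
  have "config_dist rl W 1 C t UNIV \<le> psi \<pi> C" for t
  proof -
    have "config_dist rl W 1 C t UNIV * psi \<pi> UNIV \<le> (\<Sum>D\<in>UNIV. config_dist rl W 1 C t D * psi \<pi> D)"
      by (rule member_le_sum[where f="\<lambda>D. config_dist rl W 1 C t D * psi \<pi> D"])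
         (auto intro!: mult_nonneg_nonneg cd_nonneg simp: psi_def intro: sum_nonneg pin)
    then show ?thesis using ex_eq[OF bal, of C t] psiU by simp
  qed
  then have F1: "fixation_prob rl W 1 C \<le> psi \<pi> C"
    unfolding fix_lim(2)[of 1, simplified] by (intro cSUP_least) auto
  have Fr: "psi \<pi> C \<le> fixation_prob rl W r C"
  proof (rule field_le_epsilon)
    fix e :: real assume e: "e > 0"
    obtain t where t: "1 - (config_dist rl W r C t {} + config_dist rl W r C t UNIV) < e"
      using absorb[OF r0 e] by blast
    have "psi \<pi> C \<le> (\<Sum>D\<in>UNIV. config_dist rl W r C t D * psi \<pi> D)"
      using ex_ge[of r \<pi> rl C t] r pin bal by simp
    also have "\<dots> \<le> (\<Sum>D\<in>UNIV. config_dist rl W r C t D * (if D = {} then 0 else 1))"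
      by (intro sum_mono mult_left_mono psi_le1 pin pis cd_nonneg r0)
    also have "\<dots> = 1 - config_dist rl W r C t {}"
    proof -
      have "(\<Sum>D\<in>UNIV. config_dist rl W r C t D * (if D = {} then 0 else 1)) =
            (\<Sum>D\<in>UNIV. config_dist rl W r C t D - (if D = {} then config_dist rl W r C t D else 0))"
        by (rule sum.cong) auto
      also have "\<dots> = (\<Sum>D\<in>UNIV. config_dist rl W r C t D) - config_dist rl W r C t {}"
        by (simp add: sum_subtractf)
      finally show ?thesis using cd_sum[OF r0] by simp
    qed
    also have "\<dots> \<le> config_dist rl W r C t UNIV + e" using t by simp
    also have "config_dist rl W r C t UNIV \<le> fixation_prob rl W r C"
      unfolding fix_lim(2)[OF r0] by (rule cSUP_upper) (auto intro!: bdd_aboveI[where M=1] cd_le1[OF r0])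
    finally show "psi \<pi> C \<le> fixation_prob rl W r C + e" by simp
  qed
  show ?thesis using F1 Fr by simp
qed

end

theorem theorem5:
  fixes W :: "'v::finite \<Rightarrow> 'v \<Rightarrow> real" and C :: "'v set" and r :: real and rl :: rule
  assumes "weight_matrix W"
    and "strongly_connected W"
    and "r > 1"
  shows "fixation_prob rl W 1 C \<le> fixation_prob rl W r C"
proof -
  interpret wg W using assms(1,2) by unfold_locales
  show ?thesis using main[OF assms(3)] .
qed

end
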